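(* Let $n\neq 0,-1$ be an integer and $M=E_{T(2,2n+1)}\cup N(Kb)$ the graph manifold obtained by $4$-surgery along the $n$-twist knot $K_n$. For every irreducible representation $\bar\rho:\pi_1(M)\to SL(2,\mathbb{C})$, the restriction of $\bar\rho$ to $\pi_1(N(Kb))$ is irreducible.
   Context: The $n$-twist knot $K_n$ is the two-bridge knot whose group has the presentation $\pi_1(E_{K_n})=\langle \alpha,\beta\mid \omega^n\alpha=\beta\omega^n\rangle$ with $\alpha,\beta$ meridians and $\omega=\beta\alpha^{-1}\beta^{-1}\alpha$; its Alexander polynomial is $-nt^2+(2n+1)t-n$, and $K_1$ is the figure-eight knot. $N(Kb)$ is the twisted $I$-bundle over the Klein bottle, $E_{T(2,2n+1)}$ the exterior of the $(2,2n+1)$ torus knot. $M$ is the union of these along a torus, with $\pi_1(M)=\langle a,b,x,y\mid a^2=b^{2n+1},\ x^{-1}yx=y^{-1},\ \mu=y^{-1},\ h=y^{-1}x^2\rangle$, where $\pi_1(N(Kb))=\langle x,y\mid x^{-1}yx=y^{-1}\rangle$, $\mu=b^{-n}a$ is a meridian and $h$ a regular fiber of $E_{T(2,2n+1)}$. A representation is irreducible if the only subspaces of $\mathbb{C}^2$ invariant under its image are $\{0\}$ and $\mathbb{C}^2$. *)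

theory Defs
  imports "HOL-Analysis.Analysis"
begin

type_synonym cmat = "complex^2^2"

text \<open>Natural and integer powers of 2x2 complex matrices.\<close>
primrec mat_npow :: "cmat \<Rightarrow> nat \<Rightarrow> cmat" where
  "mat_npow A 0 = mat 1"
| "mat_npow A (Suc k) = A ** mat_npow A k"

definition mat_ipow :: "cmat \<Rightarrow> int \<Rightarrow> cmat" where
  "mat_ipow A k = (if 0 \<le> k then mat_npow A (nat k) else mat_npow (matrix_inv A) (nat (- k)))"

definition SL2C :: "cmat set" where
  "SL2C = {A. det A = 1}"

text \<open>The matrix group generated by a set of invertible matrices
  (the image of a representation of a group generated by given elements).\<close>
inductive_set gen_group :: "cmat set \<Rightarrow> cmat set" for S :: "cmat set" where
  gen_one: "mat 1 \<in> gen_group S"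
| gen_mult: "g \<in> gen_group S \<Longrightarrow> s \<in> S \<Longrightarrow> g ** s \<in> gen_group S"
| gen_inv: "g \<in> gen_group S \<Longrightarrow> s \<in> S \<Longrightarrow> g ** matrix_inv s \<in> gen_group S"

text \<open>A set of matrices G (the image of a representation) acts irreducibly on C^2:
  the only complex subspaces invariant under all of G are {0} and C^2.\<close>
definition irreducible_image :: "cmat set \<Rightarrow> bool" where
  "irreducible_image G \<longleftrightarrow>
     (\<forall>W :: (complex^2) set.
        module.subspace ((*s) :: complex \<Rightarrow> complex^2 \<Rightarrow> complex^2) W \<and>
        (\<forall>g\<in>G. \<forall>w\<in>W. g *v w \<in> W)
        \<longrightarrow> W = {0} \<or> W = UNIV)"

text \<open>Representations of pi_1(M) = < a,b,x,y | a^2 = b^(2n+1), x^-1 y x = y^-1,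
  mu = y^-1, h = y^-1 x^2 >, with mu = b^-n a and h = a^2 the regular fiber,
  into SL(2,C), given by the images A,B,X,Y of the generators.\<close>
definition is_rep_M :: "int \<Rightarrow> cmat \<Rightarrow> cmat \<Rightarrow> cmat \<Rightarrow> cmat \<Rightarrow> bool" where
  "is_rep_M n A B X Y \<longleftrightarrow>
     A \<in> SL2C \<and> B \<in> SL2C \<and> X \<in> SL2C \<and> Y \<in> SL2C \<and>
     A ** A = mat_ipow B (2 * n + 1) \<and>
     matrix_inv X ** Y ** X = matrix_inv Y \<and>
     mat_ipow B (- n) ** A = matrix_inv Y \<and>
     A ** A = matrix_inv Y ** X ** X"

end

theory Submission
  imports Defs
begin
lemmas E = vec_eq_iff forall_2 sum_2 matrix_matrix_mult_def mat_def matrix_vector_mult_def det_2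

lemma sq_aux: fixes a b c d :: complex assumes "a*d \<noteq> b*c"
  shows "a*(a*(d*d)) + b*(b*(c*c)) \<noteq> 2*(a*(b*(c*d)))"
proof
  assume "a*(a*(d*d)) + b*(b*(c*c)) = 2*(a*(b*(c*d)))"
  then have "(a*d - b*c)^2 = 0" by (simp add: power2_eq_square algebra_simps)
  then show False using assms by simp
qed

lemma inv_ex: fixes M :: cmat assumes "det M \<noteq> 0"
  shows "M ** matrix_inv M = mat 1 \<and> matrix_inv M ** M = mat 1"
proof -
  define d where "d = det M"
  define N :: cmat where "N = (\<chi> i j. if i = 1 \<and> j = 1 then M$2$2/d else if i = 2 \<and> j = 2 then M$1$1/d
      else - M$i$j/d)"
  have "M ** N = mat 1 \<and> N ** M = mat 1"
    using assms unfolding N_def d_def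
    apply (simp add: E field_simps)
    using sq_aux by blast
  then show ?thesis unfolding matrix_inv_def by (rule someI)
qed

lemma npow_comm: "mat_npow M k ** M = M ** mat_npow M k"
  by (induction k) (simp_all add: matrix_mul_assoc[symmetric])

lemma npow_suc': "mat_npow M (Suc k) = mat_npow M k ** M"
  by (simp add: npow_comm)

lemma npow_one: "mat_npow (mat 1) k = mat 1"
  by (induction k) simp_all

lemma inv_one: "matrix_inv (mat 1 :: cmat) = mat 1"
proof -
  have "det (mat 1::cmat) \<noteq> 0" by (simp add: det_2 mat_def)
  then show ?thesis using inv_ex[of "mat 1"] by simp
qed

lemma ipow_one: "mat_ipow (mat 1) k = mat 1"
  by (simp add: mat_ipow_def npow_one inv_one)

context
  fixes M :: cmat assumes dM: "det M \<noteq> 0"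
begin

lemma ipow_succ: "mat_ipow M (k + 1) = mat_ipow M k ** M"
proof (cases "0 \<le> k")
  case True
  then have "nat (k+1) = Suc (nat k)" by simp
  then show ?thesis using True by (simp add: mat_ipow_def npow_suc' del: mat_npow.simps)
next
  case False
  define m where "m = nat (- k - 1)"
  have k: "nat (-k) = Suc m" using False m_def by simp
  show ?thesis
  proof (cases "k = -1")
    case True
    then show ?thesis using inv_ex[OF dM] by (simp add: mat_ipow_def)
  next
    case F2: False
    then have "nat (-(k+1)) = m" using False m_def by simp
    then show ?thesis using False F2 k inv_ex[OF dM]
      by (simp add: mat_ipow_def npow_suc' matrix_mul_assoc[symmetric] del: mat_npow.simps)
  qed
qed

lemma ipow_pred: "mat_ipow M (k - 1) = mat_ipow M k ** matrix_inv M"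
proof -
  have "mat_ipow M k = mat_ipow M (k - 1) ** M" using ipow_succ[of "k-1"] by simp
  then have "mat_ipow M k ** matrix_inv M = mat_ipow M (k - 1) ** (M ** matrix_inv M)"
    by (simp add: matrix_mul_assoc)
  then show ?thesis using inv_ex[OF dM] by simp
qed

lemma ipow_add: "mat_ipow M (i + j) = mat_ipow M i ** mat_ipow M j"
proof (induction j rule: int_induct[where k=0])
  case base
  then show ?case by (simp add: mat_ipow_def)
next
  case (step1 j)
  have "mat_ipow M (i + (j+1)) = mat_ipow M (i+j) ** M" using ipow_succ[of "i+j"] by (simp add: add.assoc)
  then show ?case using step1 ipow_succ[of j] by (simp add: matrix_mul_assoc)
next
  case (step2 j)
  have "mat_ipow M (i + (j-1)) = mat_ipow M (i+j) ** matrix_inv M" using ipow_pred[of "i+j"] by (simp add: algebra_simps)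
  then show ?case using step2 ipow_pred[of j] by (simp add: matrix_mul_assoc)
qed

lemma ipow_1: "mat_ipow M 1 = M"
  by (simp add: mat_ipow_def)

lemma ipow_commM: "mat_ipow M k ** M = M ** mat_ipow M k"
  using ipow_add[of k 1] ipow_add[of 1 k] by (simp add: ipow_1 add.commute)

end

lemma mv_scale: "(A::cmat) *v (c *s x) = c *s (A *v x)"
  by (simp add: E algebra_simps)

lemma par: fixes v w :: "complex^2" assumes "v \<noteq> 0" "v$1*w$2 = v$2*w$1"
  shows "\<exists>c. w = c *s v"
proof (cases "v$1 = 0")
  case True
  then have "v$2 \<noteq> 0" using assms(1) by (simp add: vec_eq_iff forall_2)
  then have "w$1 = 0" using assms True by simp
  then have "w = (w$2/v$2) *s v" using True \<open>v$2 \<noteq> 0\<close> by (simp add: vec_eq_iff forall_2)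
  then show ?thesis by blast
next
  case False
  then have "w = (w$1/v$1) *s v" using assms(2) by (simp add: vec_eq_iff forall_2 field_simps)
  then show ?thesis by blast
qed

lemma gen_eig: assumes "g \<in> gen_group S" "\<forall>s\<in>S. det s \<noteq> 0" "v \<noteq> 0"
   "\<forall>s\<in>S. \<exists>c. s *v v = c *s v"
  shows "\<exists>c. g *v v = c *s v"
  using assms(1)
proof induction
  case gen_one
  then show ?case by (rule exI[of _ 1]) simp
next
  case (gen_mult g s)
  then obtain c d where "g *v v = c *s v" "s *v v = d *s v" using assms by blast
  then have "(g ** s) *v v = (d*c) *s v"
    by (metis matrix_vector_mul_assoc mv_scale vector_smult_assoc)
  then show ?case by blast
next
  case (gen_inv g s)
  then obtain c d where c: "g *v v = c *s v" and d: "s *v v = d *s v" using assms by blast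
  have si: "matrix_inv s ** s = mat 1" using inv_ex gen_inv assms(2) by blast
  have "v = matrix_inv s *v (s *v v)" using si by (simp add: matrix_vector_mul_assoc)
  also have "\<dots> = d *s (matrix_inv s *v v)" using d by (simp add: mv_scale)
  finally have v: "v = d *s (matrix_inv s *v v)" .
  then have "d \<noteq> 0" using assms(3) by auto
  then have "matrix_inv s *v v = (1/d) *s v" using v by (simp add: vec_eq_iff)
  then have "(g ** matrix_inv s) *v v = (c/d) *s v"
    using c by (simp add: matrix_vector_mul_assoc[symmetric] mv_scale vector_smult_assoc)
  then show ?case by blast
qed

lemma red: assumes "\<forall>s\<in>S. det s \<noteq> 0" "v \<noteq> 0" "\<forall>s\<in>S. \<exists>c. s *v v = c *s v"
  shows "\<not> irreducible_image (gen_group S)"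
proof -
  define W where "W = {c *s v | c. True}"
  have sub: "module.subspace ((*s) :: complex \<Rightarrow> complex^2 \<Rightarrow> complex^2) W"
    unfolding W_def module.subspace_def[OF vec.module_axioms]
  proof (intro conjI ballI allI)
    have "0 = (0::complex) *s v" by simp
    then show "0 \<in> {c *s v |c. True}" by blast
  next
    fix x y assume "x \<in> {c *s v |c. True}" "y \<in> {c *s v |c. True}"
    then obtain a b where "x = a *s v" "y = b *s v" by blast
    then have "x + y = (a + b) *s v" by (simp add: vector_sadd_rdistrib)
    then show "x + y \<in> {c *s v |c. True}" by blast
  next
    fix c x assume "x \<in> {c *s v |c. True}"
    then obtain a where "x = a *s v" by blast
    then have "c *s x = (c * a) *s v" by (simp add: vector_smult_assoc)
    then show "c *s x \<in> {c *s v |c. True}" by blast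
  qed
  have inv: "\<forall>g\<in>gen_group S. \<forall>w\<in>W. g *v w \<in> W"
  proof (intro ballI)
    fix g w assume g: "g \<in> gen_group S" and w: "w \<in> W"
    obtain c where c: "g *v v = c *s v" using gen_eig[OF g assms] by blast
    obtain d where "w = d *s v" using w W_def by blast
    then have "g *v w = (d*c) *s v" using c by (simp add: mv_scale vector_smult_assoc)
    then show "g *v w \<in> W" unfolding W_def by blast
  qed
  have "v = (1::complex) *s v" by simp
  then have "v \<in> W" unfolding W_def by blast
  then have n0: "W \<noteq> {0}" using assms(2) by blast
  obtain u :: "complex^2" where u: "\<forall>c. u \<noteq> c *s v"
  proof (cases "v$1 = 0")
    case True
    define u :: "complex^2" where "u = (\<chi> i. if i = 1 then 1 else 0)"
    have "u \<noteq> c *s v" for c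
    proof
      assume "u = c *s v"
      then have "u$1 = c * v$1" by simp
      then show False using True unfolding u_def by simp
    qed
    then show ?thesis using that by blast
  next
    case False
    define u :: "complex^2" where "u = (\<chi> i. if i = 1 then 0 else 1)"
    have "u \<noteq> c *s v" for c
    proof
      assume h: "u = c *s v"
      then have "u$1 = c * v$1" by simp
      then have "c = 0" using False unfolding u_def by simp
      moreover have "u$2 = c * v$2" using h by simp
      ultimately show False unfolding u_def by simp
    qed
    then show ?thesis using that by blast
  qed
  have "W \<noteq> UNIV" using u unfolding W_def by blast
  then show ?thesis using sub inv n0 unfolding irreducible_image_def by blast
qed

lemma span2: fixes v w z :: "complex^2" assumes "v$1*w$2 \<noteq> v$2*w$1"
  shows "z = ((z$1*w$2 - z$2*w$1)/(v$1*w$2 - v$2*w$1)) *s v + ((v$1*z$2 - v$2*z$1)/(v$1*w$2 - v$2*w$1)) *s w"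
proof -
  have d: "v$1*w$2 - v$2*w$1 \<noteq> 0" using assms by simp
  define D where "D = v$1*w$2 - v$2*w$1"
  have h1: "(z$1*w$2 - z$2*w$1)* v$1 + (v$1*z$2 - v$2*z$1)*w$1 = z$1 * D" by (simp add: D_def algebra_simps)
  have h2: "(z$1*w$2 - z$2*w$1)* v$2 + (v$1*z$2 - v$2*z$1)*w$2 = z$2 * D" by (simp add: D_def algebra_simps)
  have dD: "D \<noteq> 0" using d D_def by simp
  have gen: "(p/D)*x + (q/D)*y = (p*x + q*y)/D" for p q x y :: complex by (simp add: add_divide_distrib)
  have g1: "(z$1*w$2 - z$2*w$1)/D* v$1 + (v$1*z$2 - v$2*z$1)/D*w$1 = z$1"
    unfolding gen h1 using dD by simp
  have g2: "(z$1*w$2 - z$2*w$1)/D* v$2 + (v$1*z$2 - v$2*z$1)/D*w$2 = z$2"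
    unfolding gen h2 using dD by simp
  show ?thesis using g1 g2 unfolding D_def by (simp add: vec_eq_iff forall_2 mult.commute)
qed

lemma red_inv: assumes "\<not> irreducible_image (gen_group {X, Y})"
  shows "\<exists>v. v \<noteq> 0 \<and> (\<exists>m. X *v v = m *s v) \<and> (\<exists>l. Y *v v = l *s v)"
proof -
  obtain W where sub: "module.subspace ((*s) :: complex \<Rightarrow> complex^2 \<Rightarrow> complex^2) W"
    and inv: "\<forall>g\<in>gen_group {X,Y}. \<forall>w\<in>W. g *v w \<in> W" and n0: "W \<noteq> {0}" and nU: "W \<noteq> UNIV"
    using assms unfolding irreducible_image_def by blast
  have z: "0 \<in> W" using sub vec.subspace_0 by blast
  obtain v where v: "v \<in> W" "v \<noteq> 0" using n0 z by blast
  have all: "\<exists>c. w = c *s v" if w: "w \<in> W" for w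
  proof (rule ccontr)
    assume "\<not> ?thesis"
    then have nd: "v$1*w$2 \<noteq> v$2*w$1" using par[OF v(2)] by blast
    have ab: "a *s v + b *s w \<in> W" for a b
      using vec.subspace_add[OF sub vec.subspace_scale[OF sub v(1)] vec.subspace_scale[OF sub w]] .
    have "z \<in> W" for z
      by (subst span2[OF nd, of z]) (rule ab)
    then show False using nU by blast
  qed
  have X: "X \<in> gen_group {X,Y}" using gen_group.gen_mult[OF gen_group.gen_one, of X "{X,Y}"] by simp
  have Y: "Y \<in> gen_group {X,Y}" using gen_group.gen_mult[OF gen_group.gen_one, of Y "{X,Y}"] by simp
  obtain m where m: "X *v v = m *s v" using all[OF inv[rule_format, OF X v(1)]] by blast
  obtain l where l: "Y *v v = l *s v" using all[OF inv[rule_format, OF Y v(1)]] by blast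
  show ?thesis using m l v(2) by blast
qed

lemma factE: fixes M N :: cmat assumes "N \<noteq> 0" "N *v v = 0" "v \<noteq> 0" "M ** N = N ** M"
  shows "\<exists>c. M *v v = c *s v"
proof (rule ccontr)
  assume nt: "\<not> ?thesis"
  define w where "w = M *v v"
  then have nd: "v$1*w$2 \<noteq> v$2*w$1" using par[OF assms(3)] nt by blast
  have "N *v w = M *v (N *v v)" unfolding w_def by (simp add: matrix_vector_mul_assoc assms(4))
  then have Nw: "N *v w = 0" using assms(2) by (simp add: E)
  have "N $ i $ 1 = 0 \<and> N $ i $ 2 = 0" for i
  proof -
    have "(N *v v)$i = 0" using assms(2) by simp
    then have e1: "N$i$1 * v$1 + N$i$2 * v$2 = 0" by (simp add: matrix_vector_mult_def sum_2)
    have "(N *v w)$i = 0" using Nw by simp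
    then have e2: "N$i$1 * w$1 + N$i$2 * w$2 = 0" by (simp add: matrix_vector_mult_def sum_2)
    have "N$i$1 * (v$1*w$2 - v$2*w$1) = w$2*(N$i$1 * v$1 + N$i$2 * v$2) - v$2*(N$i$1 * w$1 + N$i$2 * w$2)"
      by (simp add: algebra_simps)
    then have "N$i$1 * (v$1*w$2 - v$2*w$1) = 0" using e1 e2 by simp
    moreover have "N$i$2 * (v$1*w$2 - v$2*w$1) = v$1*(N$i$1 * w$1 + N$i$2 * w$2) - w$1*(N$i$1 * v$1 + N$i$2 * v$2)"
      by (simp add: algebra_simps)
    then have "N$i$2 * (v$1*w$2 - v$2*w$1) = 0" using e1 e2 by simp
    ultimately show ?thesis using nd by simp
  qed
  then have "N = 0" by (simp add: vec_eq_iff forall_2)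
  then show False using assms(1) by simp
qed


lemma nz_scale: fixes v :: "complex^2" assumes "v \<noteq> 0" "a *s v = b *s v" shows "a = b"
proof -
  obtain i where "v$i \<noteq> 0" using assms(1) by (metis vec_eq_iff zero_index)
  moreover have "a * v$i = b * v$i" using assms(2) by (metis vector_smult_component)
  ultimately show ?thesis by simp
qed

lemma factF: fixes Y :: cmat assumes "det Y = 1" "Y ** Y = mat 1" "Y *v v = l *s v" "v \<noteq> 0"
  shows "Y = mat l"
proof -
  have "v = (Y ** Y) *v v" using assms(2) by simp
  also have "\<dots> = (l*l) *s v" by (simp add: matrix_vector_mul_assoc[symmetric] assms(3) mv_scale vector_smult_assoc)
  finally have l2: "l*l = 1" using nz_scale[OF assms(4), of 1 "l*l"] by simp
  define a where "a = Y$1$1"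
  define b where "b = Y$1$2"
  define c where "c = Y$2$1"
  define d where "d = Y$2$2"
  have dt: "a*d - b*c = 1" using assms(1) by (simp add: det_2 a_def b_def c_def d_def)
  have sq: "a*a + b*c = 1" "a*b + b*d = 0" "c*a + d*c = 0" "c*b + d*d = 1"
    using assms(2) by (simp_all add: E a_def b_def c_def d_def)
  have ev: "a * v$1 + b * v$2 = l * v$1" "c * v$1 + d * v$2 = l * v$2"
    using assms(3) by (simp_all add: E a_def b_def c_def d_def)
  define D where "D = (a-l)*(d-l) - b*c"
  have "D * v$1 = (d-l)*(a* v$1 + b* v$2 - l* v$1) - b*(c* v$1 + d* v$2 - l* v$2)"
    by (simp add: D_def algebra_simps)
  then have D1: "D * v$1 = 0" using ev by simp
  have "D * v$2 = (a-l)*(c* v$1 + d* v$2 - l* v$2) - c*(a* v$1 + b* v$2 - l* v$1)"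
    by (simp add: D_def algebra_simps)
  then have D2: "D * v$2 = 0" using ev by simp
  have "D = 0" using D1 D2 assms(4) by (auto simp: vec_eq_iff forall_2)
  then have "1 - l*(a+d) + l*l = 0" using dt by (simp add: D_def algebra_simps)
  then have tr: "l*(a+d) = 2" using l2 by (simp add: algebra_simps)
  then have "a + d \<noteq> 0" by auto
  moreover have "b*(a+d) = 0" "c*(a+d) = 0" using sq by (simp_all add: algebra_simps)
  ultimately have bc: "b = 0" "c = 0" by simp_all
  have "a + d = 2*l" using tr l2 by (metis mult.assoc mult.commute mult.left_neutral)
  then have dd: "d = 2*l - a" by (metis add_diff_cancel_left')
  have "(a - l)*(a - l) = 0" using dt bc l2 unfolding dd by (simp add: algebra_simps)
  then have al: "a = l" by simp
  then have "d = l" using dd by simp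
  then show ?thesis using al bc unfolding a_def b_def c_def d_def by (simp add: E)
qed

lemma mat_comm: "(M::cmat) ** mat c = mat c ** M"
  by (simp add: E)

lemma mat_mat: "(mat a :: cmat) ** mat b = mat (a*b)"
  by (simp add: E)

lemma mat_v: "(mat c :: cmat) *v v = c *s v"
  by (simp add: E)

lemma msub_l: "(M::cmat) ** (Y - Z) = M ** Y - M ** Z"
  by (simp add: matrix_matrix_mult_def vec_eq_iff sum_2 algebra_simps)

lemma msub_r: "((Y::cmat) - Z) ** M = Y ** M - Z ** M"
  by (simp add: matrix_matrix_mult_def vec_eq_iff sum_2 algebra_simps)

lemma comm_sub: assumes "(M::cmat) ** Y = Y ** M" shows "M ** (Y - mat l) = (Y - mat l) ** M"
  unfolding msub_l msub_r assms mat_comm[of M l] ..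

lemma det_mat: "det (mat c :: cmat) = c*c"
  by (simp add: det_2 mat_def)

lemma main:
  fixes n :: int and A B X Y :: "complex^2^2"
  assumes rep: "is_rep_M n A B X Y"
    and irr: "irreducible_image (gen_group {A, B, X, Y})"
  shows "irreducible_image (gen_group {X, Y})"
proof (rule ccontr)
  assume nirr: "\<not> irreducible_image (gen_group {X, Y})"
  have dA: "det A = 1" and dB: "det B = 1" and dX: "det X = 1" and dY: "det Y = 1"
    using rep unfolding is_rep_M_def SL2C_def by auto
  define Xi where "Xi = matrix_inv X"
  define Yi where "Yi = matrix_inv Y"
  define P where "P = mat_ipow B n"
  define Q where "Q = mat_ipow B (-n)"
  have r1: "Xi ** Y ** X = Yi" and r2: "Q ** A = Yi" and r3: "A ** A = mat_ipow B (2*n+1)"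
    and r4: "A ** A = Yi ** X ** X"
    using rep unfolding is_rep_M_def Xi_def Yi_def Q_def by auto
  have xi: "X ** Xi = mat 1" "Xi ** X = mat 1" using inv_ex[of X] dX Xi_def by auto
  have yi: "Y ** Yi = mat 1" "Yi ** Y = mat 1" using inv_ex[of Y] dY Yi_def by auto
  have dB0: "det B \<noteq> 0" using dB by simp
  have PQ: "P ** Q = mat 1" "Q ** P = mat 1"
    using ipow_add[OF dB0, of n "-n"] ipow_add[OF dB0, of "-n" n] unfolding P_def Q_def
    by (simp_all add: mat_ipow_def)
  have B3: "A ** A = P ** P ** B"
    using r3 ipow_add[OF dB0, of "n+n" 1] ipow_add[OF dB0, of n n] ipow_1[OF dB0] unfolding P_def
    by (simp add: algebra_simps)
  have PB: "P ** B = B ** P" unfolding P_def using ipow_commM[OF dB0] .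
  obtain v m l where v0: "v \<noteq> 0" and Xv: "X *v v = m *s v" and Yv: "Y *v v = l *s v"
    using red_inv[OF nirr] by blast
  have E1: "Y ** X = X ** Yi"
  proof -
    have "X ** (Xi ** Y ** X) = (X ** Xi) ** Y ** X" by (simp add: matrix_mul_assoc)
    then show ?thesis using r1 xi by simp
  qed
  have XXY: "Y ** (X ** X) = (X ** X) ** Y"
  proof -
    have "Yi ** (Y ** X) ** Y = Yi ** (X ** Yi) ** Y" using E1 by simp
    moreover have "Yi ** (Y ** X) ** Y = (Yi ** Y) ** (X ** Y)" by (simp add: matrix_mul_assoc)
    moreover have "Yi ** (X ** Yi) ** Y = (Yi ** X) ** (Yi ** Y)" by (simp add: matrix_mul_assoc)
    ultimately have E2: "X ** Y = Yi ** X" using yi by simp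
    have "Y ** (X ** X) = (Y ** X) ** X" by (simp add: matrix_mul_assoc)
    also have "\<dots> = X ** (Yi ** X)" using E1 by (simp add: matrix_mul_assoc)
    also have "\<dots> = X ** (X ** Y)" using E2 by simp
    also have "\<dots> = (X ** X) ** Y" by (simp add: matrix_mul_assoc)
    finally show ?thesis .
  qed
  have goal: "(\<exists>ca. A *v v = ca *s v) \<and> (\<exists>cb. B *v v = cb *s v)"
  proof (cases "Y = mat l")
    case True
    have "Yi = Xi ** mat l ** X" using r1 True by simp
    also have "\<dots> = mat l ** (Xi ** X)" by (simp add: mat_comm matrix_mul_assoc)
    finally have Yil: "Yi = mat l" using xi by simp
    have "mat (l*l) = (mat 1 :: cmat)" using yi(1) True Yil mat_mat by simp
    then have "(mat (l*l) :: cmat)$1$1 = (mat 1 :: cmat)$1$1" by simp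
    then have l2: "l * l = 1" by (simp add: mat_def)
    have A: "A = P ** mat l"
    proof -
      have "A = (P ** Q) ** A" using PQ by simp
      also have "\<dots> = P ** mat l" using r2 Yil by (simp add: matrix_mul_assoc[symmetric])
      finally show ?thesis .
    qed
    have "A ** A = P ** (mat l ** P) ** mat l"
      unfolding A by (simp add: matrix_mul_assoc)
    also have "mat l ** P = P ** mat l" by (rule mat_comm[symmetric])
    finally have "A ** A = P ** P ** (mat l ** mat l)" by (simp add: matrix_mul_assoc)
    then have "A ** A = P ** P ** mat (l*l)" by (simp add: mat_mat)
    then have "P ** P ** B = P ** P" using B3 l2 by simp
    then have "(Q ** Q) ** (P ** P ** B) = (Q ** Q) ** (P ** P)" by simp
    moreover have "(Q ** Q) ** (P ** P) = Q ** ((Q ** P) ** P)" by (simp add: matrix_mul_assoc)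
    moreover have "(Q ** Q) ** (P ** P ** B) = ((Q ** Q) ** (P ** P)) ** B" by (simp add: matrix_mul_assoc)
    ultimately have "B = mat 1" using PQ by simp
    then have "P = mat 1" unfolding P_def by (simp add: ipow_one)
    then have "A = mat l" using A by simp
    then have "A *v v = l *s v" "B *v v = 1 *s v" using \<open>B = mat 1\<close> by (auto simp: mat_v)
    then show ?thesis by blast
  next
    case False
    define N where "N = Y - mat l"
    have N0: "N \<noteq> 0" using False unfolding N_def by (metis diff_eq_diff_eq diff_self)
    have Nv: "N *v v = 0" unfolding N_def using Yv by (simp add: matrix_vector_mult_diff_rdistrib mat_v)
    have AAY: "(A ** A) ** Y = Y ** (A ** A)"
    proof -
      have "(A ** A) ** Y = Yi ** ((X ** X) ** Y)" using r4 by (simp add: matrix_mul_assoc)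
      also have "\<dots> = Yi ** (Y ** (X ** X))" using XXY by simp
      also have "\<dots> = (Yi ** Y) ** (X ** X)" by (simp add: matrix_mul_assoc)
      also have "\<dots> = X ** X" using yi by simp
      also have "\<dots> = (Y ** Yi) ** X ** X" using yi by simp
      also have "\<dots> = Y ** (A ** A)" using r4 by (simp add: matrix_mul_assoc)
      finally show ?thesis .
    qed
    have AAN: "(A ** A) ** N = N ** (A ** A)" unfolding N_def by (rule comm_sub[OF AAY])
    obtain c where AAv: "(A ** A) *v v = c *s v"
      using factE[OF N0 Nv v0 AAN] by blast
    show ?thesis
    proof (cases "A ** A = mat c")
      case False
      define K where "K = A ** A - mat c"
      have K0: "K \<noteq> 0" using False unfolding K_def by (metis diff_eq_diff_eq diff_self)
      have Kv: "K *v v = 0" unfolding K_def using AAv by (simp add: matrix_vector_mult_diff_rdistrib mat_v)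
      have cA: "A ** (A ** A) = (A ** A) ** A" by (simp add: matrix_mul_assoc)
      have "B ** (P ** P ** B) = (B ** P) ** (P ** B)" by (simp add: matrix_mul_assoc)
      also have "\<dots> = (P ** B) ** (B ** P)" using PB by simp
      also have "\<dots> = P ** ((B ** B) ** P)" by (simp add: matrix_mul_assoc)
      also have "(B ** B) ** P = B ** (B ** P)" by (simp add: matrix_mul_assoc)
      also have "\<dots> = B ** (P ** B)" using PB by simp
      also have "P ** (B ** (P ** B)) = (P ** P ** B) ** B"
      proof -
        have "P ** (B ** (P ** B)) = P ** ((B ** P) ** B)" by (simp add: matrix_mul_assoc)
        also have "\<dots> = P ** ((P ** B) ** B)" using PB by simp
        finally show ?thesis by (simp add: matrix_mul_assoc)
      qed
      finally have cB: "B ** (A ** A) = (A ** A) ** B" unfolding B3 .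
      have "A ** K = K ** A" unfolding K_def by (rule comm_sub[OF cA])
      then have ca: "\<exists>ca. A *v v = ca *s v" by (rule factE[OF K0 Kv v0])
      have "B ** K = K ** B" unfolding K_def by (rule comm_sub[OF cB])
      then have cb: "\<exists>cb. B *v v = cb *s v" by (rule factE[OF K0 Kv v0])
      show ?thesis using ca cb by blast
    next
      case True
      have XX: "X ** X = Y ** mat c"
      proof -
        have "Y ** (Yi ** X ** X) = Y ** mat c" using r4 True by simp
        then show ?thesis using yi by (simp add: matrix_mul_assoc)
      qed
      have "det (X ** X) = 1" using dX by (simp add: det_mul)
      then have "c * c = 1" using XX dY by (simp add: det_mul det_mat)
      then have c0: "c \<noteq> 0" by auto
      have "X ** (X ** X) = (X ** X) ** X" by (simp add: matrix_mul_assoc)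
      then have h: "X ** (Y ** mat c) = (Y ** mat c) ** X" by (simp only: XX)
      have "(X ** Y) ** mat c = X ** (Y ** mat c)" by (simp add: matrix_mul_assoc)
      also have "\<dots> = (Y ** mat c) ** X" by (rule h)
      also have "\<dots> = Y ** (mat c ** X)" by (simp add: matrix_mul_assoc)
      also have "mat c ** X = X ** mat c" by (rule mat_comm[symmetric])
      also have "Y ** (X ** mat c) = (Y ** X) ** mat c" by (simp add: matrix_mul_assoc)
      finally have "(X ** Y) ** mat c = (Y ** X) ** mat c" .
      then have "(X ** Y) ** mat c ** mat (1/c) = (Y ** X) ** mat c ** mat (1/c)" by simp
      moreover have cancel: "(M ** mat c) ** mat (1/c) = M" for M :: cmat
        using c0 by (simp add: matrix_mul_assoc[symmetric] mat_mat)
      ultimately have XY: "X ** Y = Y ** X" by (simp only: cancel)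
      have "Xi ** (X ** Y) = Xi ** (X ** Yi)" using XY E1 by simp
      then have "Y = Yi" using xi by (simp add: matrix_mul_assoc)
      then have "Y ** Y = mat 1" using yi by simp
      then have "Y = mat l" using factF[OF dY _ Yv v0] by simp
      then show ?thesis using \<open>\<not> Y = mat l\<close> by simp
    qed
  qed
  have "\<not> irreducible_image (gen_group {A, B, X, Y})"
    apply (rule red[OF _ v0])
    using dA dB dX dY goal Xv Yv by auto
  then show False using irr by simp
qed


theorem proposition3p8:
  fixes n :: int and A B X Y :: "complex^2^2"
  assumes "n \<noteq> 0" and "n \<noteq> -1"
    and "is_rep_M n A B X Y"
    and "irreducible_image (gen_group {A, B, X, Y})"
  shows "irreducible_image (gen_group {X, Y})"
  using main[OF assms(3) assms(4)] .

end
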